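(* Let $t\ge 3$ and let $G_t$ be the labeling of the complete graph $K_{2t}$ in which the edges of a fixed perfect matching are labeled $-$ and all other edges are labeled $+$. Consider the linear program $\mathsf{L}$ in variables $M\in\mathbb{R}$ and $x_{uv}$ for each unordered pair $uv$ of distinct vertices: minimize $M$ subject to $x_{uv}\le x_{uz}+x_{zv}$ for all distinct $u,v,z$; $\sum_{w\in N^+(v)}x_{vw}+\sum_{w\in N^-(v)}(1-x_{vw})\le M$ for all vertices $v$; and $0\le x_{e}\le 1$ for all edges $e$. Then the unique optimal solution of $\mathsf{L}$ has $x_{uv}=0$ for all edges $uv$ of $G_t$.
   Context: $N^+(v)$ and $N^-(v)$ denote the sets of vertices joined to $v$ by a $+$ edge, resp. a $-$ edge. *)

theory Defs
  imports Complex_Main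
begin

text \<open>Vertex set V of the complete graph; edges are 2-element sets {u,v}, u \<noteq> v.
  The labeling G_t: edges in the perfect matching PM are labelled -, all others +.\<close>

definition perfect_matching :: "'a set \<Rightarrow> 'a set set \<Rightarrow> bool" where
  "perfect_matching V PM \<longleftrightarrow>
     (\<forall>e\<in>PM. \<exists>u\<in>V. \<exists>v\<in>V. u \<noteq> v \<and> e = {u, v}) \<and>
     (\<forall>v\<in>V. \<exists>!e. e \<in> PM \<and> v \<in> e)"

definition Npos :: "'a set \<Rightarrow> 'a set set \<Rightarrow> 'a \<Rightarrow> 'a set" where
  "Npos V PM v = {w \<in> V. w \<noteq> v \<and> {v, w} \<notin> PM}"

definition Nneg :: "'a set \<Rightarrow> 'a set set \<Rightarrow> 'a \<Rightarrow> 'a set" where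
  "Nneg V PM v = {w \<in> V. w \<noteq> v \<and> {v, w} \<in> PM}"

definition L_feasible :: "'a set \<Rightarrow> 'a set set \<Rightarrow> real \<Rightarrow> ('a set \<Rightarrow> real) \<Rightarrow> bool" where
  "L_feasible V PM M x \<longleftrightarrow>
     (\<forall>u\<in>V. \<forall>v\<in>V. \<forall>z\<in>V. u \<noteq> v \<and> u \<noteq> z \<and> v \<noteq> z \<longrightarrow> x {u, v} \<le> x {u, z} + x {z, v}) \<and>
     (\<forall>v\<in>V. (\<Sum>w\<in>Npos V PM v. x {v, w}) + (\<Sum>w\<in>Nneg V PM v. 1 - x {v, w}) \<le> M) \<and>
     (\<forall>u\<in>V. \<forall>v\<in>V. u \<noteq> v \<longrightarrow> 0 \<le> x {u, v} \<and> x {u, v} \<le> 1)"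

definition L_optimal :: "'a set \<Rightarrow> 'a set set \<Rightarrow> real \<Rightarrow> ('a set \<Rightarrow> real) \<Rightarrow> bool" where
  "L_optimal V PM M x \<longleftrightarrow> L_feasible V PM M x \<and> (\<forall>M' x'. L_feasible V PM M' x' \<longrightarrow> M \<le> M')"

end

theory Submission
  imports Defs
begin

lemma partner:
  assumes pm: "perfect_matching V PM" and v: "v \<in> V"
  obtains p where "p \<in> V" "p \<noteq> v" "{v,p} \<in> PM" "Nneg V PM v = {p}" "Npos V PM v = V - {v,p}"
proof -
  from pm v obtain e where e: "e \<in> PM" "v \<in> e" and uq: "\<And>e'. e' \<in> PM \<and> v \<in> e' \<Longrightarrow> e' = e"
    unfolding perfect_matching_def by metis
  from pm e obtain a b where ab: "a \<in> V" "b \<in> V" "a \<noteq> b" "e = {a,b}"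
    unfolding perfect_matching_def by metis
  obtain p where p: "p \<in> V" "p \<noteq> v" "e = {v,p}"
    using ab e(2) by (metis empty_iff insert_commute insert_iff)
  have nn: "Nneg V PM v = {p}"
  proof
    show "Nneg V PM v \<subseteq> {p}"
    proof
      fix w assume "w \<in> Nneg V PM v"
      hence "w \<noteq> v" "{v,w} \<in> PM" unfolding Nneg_def by auto
      hence "{v,w} = {v,p}" using uq p(3) by auto
      thus "w \<in> {p}" using \<open>w \<noteq> v\<close> by (metis doubleton_eq_iff singletonI)
    qed
    show "{p} \<subseteq> Nneg V PM v" using p e unfolding Nneg_def by auto
  qed
  have np: "Npos V PM v = V - {v,p}"
  proof
    show "Npos V PM v \<subseteq> V - {v,p}"
    proof
      fix w assume "w \<in> Npos V PM v"
      thus "w \<in> V - {v,p}" using p e unfolding Npos_def by auto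
    qed
    show "V - {v,p} \<subseteq> Npos V PM v"
    proof
      fix w assume w: "w \<in> V - {v,p}"
      have "{v,w} \<notin> PM"
      proof
        assume "{v,w} \<in> PM"
        hence "w \<in> Nneg V PM v" using w unfolding Nneg_def by auto
        thus False using nn w by auto
      qed
      thus "w \<in> Npos V PM v" using w unfolding Npos_def by auto
    qed
  qed
  show thesis using that p e nn np by auto
qed

lemma partner_sym:
  assumes pm: "perfect_matching V PM" and "p \<in> V" "p \<noteq> v" "v \<in> V" "{v,p} \<in> PM"
  shows "Nneg V PM p = {v}" "Npos V PM p = V - {v,p}"
proof -
  obtain q where q: "q \<in> V" "q \<noteq> p" "{p,q} \<in> PM" "Nneg V PM p = {q}" "Npos V PM p = V - {p,q}"
    using partner[OF pm assms(2)] by metis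
  have "v \<in> Nneg V PM p" using assms unfolding Nneg_def by (auto simp: insert_commute)
  hence "q = v" using q by auto
  thus "Nneg V PM p = {v}" "Npos V PM p = V - {v,p}" using q by (auto simp: insert_commute)
qed

lemma feasD1: "L_feasible V PM M x \<Longrightarrow> u \<in> V \<Longrightarrow> v \<in> V \<Longrightarrow> z \<in> V \<Longrightarrow> u \<noteq> v \<Longrightarrow> u \<noteq> z \<Longrightarrow> v \<noteq> z \<Longrightarrow> x {u, v} \<le> x {u, z} + x {z, v}"
  unfolding L_feasible_def by blast

lemma feasD2: "L_feasible V PM M x \<Longrightarrow> v \<in> V \<Longrightarrow> (\<Sum>w\<in>Npos V PM v. x {v, w}) + (\<Sum>w\<in>Nneg V PM v. 1 - x {v, w}) \<le> M"
  unfolding L_feasible_def by blast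

lemma feasD3: "L_feasible V PM M x \<Longrightarrow> u \<in> V \<Longrightarrow> v \<in> V \<Longrightarrow> u \<noteq> v \<Longrightarrow> 0 \<le> x {u, v}"
  unfolding L_feasible_def by blast

lemma key:
  assumes pm: "perfect_matching V PM" and fin: "finite V" and cV: "card V = 2*t" and t: "t \<ge> 3"
    and F: "L_feasible V PM M x" and v: "v \<in> V"
    and p: "p \<in> V" "p \<noteq> v" "{v,p} \<in> PM" "Nneg V PM v = {p}" "Npos V PM v = V - {v,p}"
  shows "2 + (2*real t - 4) * x {v,p} \<le> 2*M"
proof -
  have ps: "Nneg V PM p = {v}" "Npos V PM p = V - {v,p}"
    using partner_sym[OF pm p(1,2) v p(3)] by auto
  define A where "A = V - {v,p}"
  have cA: "card A = 2*t - 2" unfolding A_def using fin v p cV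
    by (subst card_Diff_subset) auto
  have Sv: "(\<Sum>w\<in>A. x {v,w}) + (1 - x {v,p}) \<le> M"
    using feasD2[OF F v] p unfolding A_def by simp
  have Sp: "(\<Sum>w\<in>A. x {p,w}) + (1 - x {v,p}) \<le> M"
    using feasD2[OF F p(1)] ps unfolding A_def by (simp add: insert_commute)
  have tri: "\<And>w. w \<in> A \<Longrightarrow> x {v,p} \<le> x {v,w} + x {p,w}"
  proof -
    fix w assume w: "w \<in> A"
    have "x {v,p} \<le> x {v,w} + x {w,p}"
      using feasD1[OF F v p(1), of w] v p w unfolding A_def by blast
    thus "x {v,p} \<le> x {v,w} + x {p,w}" by (simp add: insert_commute)
  qed
  have "(\<Sum>w\<in>A. x {v,p}) \<le> (\<Sum>w\<in>A. x {v,w} + x {p,w})"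
    by (rule sum_mono) (rule tri)
  hence "real (card A) * x {v,p} \<le> (\<Sum>w\<in>A. x {v,w}) + (\<Sum>w\<in>A. x {p,w})"
    by (simp add: sum.distrib)
  moreover have "real (card A) = 2*real t - 2" using cA t by auto
  ultimately show ?thesis using Sv Sp by (simp add: algebra_simps)
qed

theorem proposition1:
  fixes V :: "'a set" and PM :: "'a set set" and t :: nat
  assumes "finite V" and "card V = 2 * t" and "t \<ge> 3"
    and "perfect_matching V PM"
  shows "\<exists>M x. L_optimal V PM M x \<and>
           (\<forall>M' x'. L_optimal V PM M' x' \<longrightarrow>
               M' = M \<and> (\<forall>u\<in>V. \<forall>v\<in>V. u \<noteq> v \<longrightarrow> x' {u, v} = x {u, v})) \<and>
           (\<forall>u\<in>V. \<forall>v\<in>V. u \<noteq> v \<longrightarrow> x {u, v} = 0)"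
proof -
  note pm = assms(4)
  have feas0: "L_feasible V PM 1 (\<lambda>_. 0)"
    unfolding L_feasible_def
  proof (intro conjI ballI impI)
    fix v assume v: "v \<in> V"
    obtain p where "p \<in> V" "p \<noteq> v" "{v,p} \<in> PM" "Nneg V PM v = {p}" "Npos V PM v = V - {v,p}"
      using partner[OF pm v] by metis
    thus "(\<Sum>w\<in>Npos V PM v. (0::real)) + (\<Sum>w\<in>Nneg V PM v. 1 - 0) \<le> 1" by simp
  qed auto
  obtain v0 where v0: "v0 \<in> V" using assms(2,3) by fastforce
  have lb: "1 \<le> M" if F: "L_feasible V PM M x" for M x
  proof -
    obtain p where p: "p \<in> V" "p \<noteq> v0" "{v0,p} \<in> PM" "Nneg V PM v0 = {p}" "Npos V PM v0 = V - {v0,p}"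
      using partner[OF pm v0] by metis
    have "2 + (2*real t - 4) * x {v0,p} \<le> 2*M" using key[OF pm assms(1,2,3) F v0 p] .
    moreover have "0 \<le> x {v0,p}" using feasD3[OF F v0 p(1)] p by blast
    moreover have "0 \<le> 2*real t - 4" using assms(3) by simp
    ultimately show ?thesis by (smt (verit) mult_nonneg_nonneg)
  qed
  have opt0: "L_optimal V PM 1 (\<lambda>_. 0)" unfolding L_optimal_def using feas0 lb by blast
  show ?thesis
  proof (intro exI conjI allI impI ballI)
    show "L_optimal V PM 1 (\<lambda>_. 0)" by (rule opt0)
  next
    fix M' x' assume O: "L_optimal V PM M' x'"
    hence F: "L_feasible V PM M' x'" and "M' \<le> 1" using feas0 unfolding L_optimal_def by auto
    thus "M' = 1" using lb by force
    fix u v assume u: "u \<in> V" and v: "v \<in> V" and uv: "u \<noteq> v"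
    obtain p where p: "p \<in> V" "p \<noteq> u" "{u,p} \<in> PM" "Nneg V PM u = {p}" "Npos V PM u = V - {u,p}"
      using partner[OF pm u] by metis
    have k: "2 + (2*real t - 4) * x' {u,p} \<le> 2*M'" using key[OF pm assms(1,2,3) F u p] .
    have "0 < 2*real t - 4" using assms(3) by simp
    hence "(2*real t - 4) * x' {u,p} \<le> 0" using k \<open>M' \<le> 1\<close> by simp
    hence xp: "x' {u,p} \<le> 0" using \<open>0 < 2*real t - 4\<close> by (simp add: mult_le_0_iff)
    have x0: "x' {u,p} = 0" using xp feasD3[OF F u p(1)] p by force
    have S: "(\<Sum>w\<in>V - {u,p}. x' {u,w}) + (1 - x' {u,p}) \<le> M'"
      using feasD2[OF F u] p by simp
    have nonneg: "\<forall>w\<in>V - {u,p}. 0 \<le> x' {u,w}" using feasD3[OF F u] by auto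
    have "(\<Sum>w\<in>V - {u,p}. x' {u,w}) \<le> 0" using S x0 \<open>M' \<le> 1\<close> by simp
    moreover have "(\<Sum>w\<in>V - {u,p}. x' {u,w}) \<ge> 0" using nonneg by (meson sum_nonneg)
    ultimately have "(\<Sum>w\<in>V - {u,p}. x' {u,w}) = 0" by simp
    hence all0: "\<forall>w\<in>V - {u,p}. x' {u,w} = 0"
      using sum_nonneg_eq_0_iff[of "V - {u,p}" "\<lambda>w. x' {u,w}"] nonneg assms(1) by auto
    show "x' {u,v} = (\<lambda>_. 0::real) {u,v}"
      using all0 x0 v uv by (cases "v = p") auto
  qed auto
qed

end
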